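(* There exist two tree-child phylogenetic networks $N_{11}$ and $N_{12}$ on $S=\{1,2,3,4,5\}$ such that $N_{11}\not\cong N_{12}$, $\theta_{AB}(N_{11})=\theta_{AB}(N_{12})$, $\Psi(N_{11})=\Psi(N_{12})$, and the set of reticulation scenarios $\{RS(v)\}$ of hybrid nodes is the same in both.
   Context: A DAG $N=(V,E)$ is labeled in a finite set $S$ if its leaves (out-degree 0) are bijectively labeled by $S$; leaves are identified with their labels. A tree node has in-degree at most 1; a hybrid node has in-degree greater than 1. Isomorphism ($\cong$) means isomorphism of directed graphs preserving leaf labels. A tree child of a node is a child that is a tree node. A tree-child phylogenetic network on $S$ is a rooted DAG labeled in $S$ in which every non-leaf node has at least one tree child, no tree node has out-degree 1, and every hybrid node has out-degree exactly 1. For a node $u$: $C(u)$ is the set of leaves descending from $u$; $A(u)$ the set of leaves $s$ such that every path from the root to $s$ contains $u$; $B(u)=C(u)\setminus A(u)$. For an arc $e=(u,v)$: $\theta(e)=(A(v),B(v),S\setminus C(v))$; $\theta_{AB}(e)$ is that triple with each leaf $s\in A(v)\cup B(v)$ weighted by the maximum number of hybrid nodes on a path from $v$ to $s$ (including $v,s$); $\theta_{AB}(N)=\{\theta_{AB}(e)\mid e\in E\}$. An arc is a tree arc if its head is a tree node and a network arc otherwise. $RS(v)=\{C(u)\mid u$ a parent of $v\}$ for a hybrid node $v$. $\Psi(e)=\theta_{AB}(e)$ for a tree arc and $\Psi(e)=(\theta(e),RS(v))$ for a network arc with head $v$; $\Psi(N)=\{\Psi(e)\mid e\in E\}$. *)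

theory Defs
  imports Main
begin

(* A labelling
   lab maps the leaves bijectively onto the label set S; all leaf-set notions
   (C, A, B, theta, ...) are expressed in terms of labels. *)

definition parents :: "('v \<times> 'v) set \<Rightarrow> 'v \<Rightarrow> 'v set" where
  "parents E v = {u. (u, v) \<in> E}"

definition children :: "('v \<times> 'v) set \<Rightarrow> 'v \<Rightarrow> 'v set" where
  "children E u = {v. (u, v) \<in> E}"

definition indeg :: "('v \<times> 'v) set \<Rightarrow> 'v \<Rightarrow> nat" where
  "indeg E v = card (parents E v)"

definition outdeg :: "('v \<times> 'v) set \<Rightarrow> 'v \<Rightarrow> nat" where
  "outdeg E v = card (children E v)"

definition is_dag :: "'v set \<Rightarrow> ('v \<times> 'v) set \<Rightarrow> bool" where
  "is_dag V E \<longleftrightarrow> finite V \<and> E \<subseteq> V \<times> V \<and> acyclic E"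

definition leaves :: "'v set \<Rightarrow> ('v \<times> 'v) set \<Rightarrow> 'v set" where
  "leaves V E = {v \<in> V. outdeg E v = 0}"

definition is_tree_node :: "('v \<times> 'v) set \<Rightarrow> 'v \<Rightarrow> bool" where
  "is_tree_node E v \<longleftrightarrow> indeg E v \<le> 1"

definition is_hybrid :: "('v \<times> 'v) set \<Rightarrow> 'v \<Rightarrow> bool" where
  "is_hybrid E v \<longleftrightarrow> indeg E v > 1"

(* rooted: some node from which every node is reachable (in a DAG it is the
   unique node of in-degree 0) *)
definition is_root :: "'v set \<Rightarrow> ('v \<times> 'v) set \<Rightarrow> 'v \<Rightarrow> bool" where
  "is_root V E r \<longleftrightarrow> r \<in> V \<and> (\<forall>v\<in>V. (r, v) \<in> E\<^sup>*)"

definition rooted :: "'v set \<Rightarrow> ('v \<times> 'v) set \<Rightarrow> bool" where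
  "rooted V E \<longleftrightarrow> (\<exists>r. is_root V E r)"

definition root :: "'v set \<Rightarrow> ('v \<times> 'v) set \<Rightarrow> 'v" where
  "root V E = (THE r. is_root V E r)"

definition labeled_in :: "'v set \<Rightarrow> ('v \<times> 'v) set \<Rightarrow> ('v \<Rightarrow> 'l) \<Rightarrow> 'l set \<Rightarrow> bool" where
  "labeled_in V E lab S \<longleftrightarrow> bij_betw lab (leaves V E) S"

definition tree_child_network ::
  "'v set \<Rightarrow> ('v \<times> 'v) set \<Rightarrow> ('v \<Rightarrow> 'l) \<Rightarrow> 'l set \<Rightarrow> bool" where
  "tree_child_network V E lab S \<longleftrightarrow>
     is_dag V E \<and> rooted V E \<and> labeled_in V E lab S \<and>
     (\<forall>u\<in>V - leaves V E. \<exists>c\<in>children E u. is_tree_node E c) \<and>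
     (\<forall>u\<in>V. is_tree_node E u \<longrightarrow> outdeg E u \<noteq> 1) \<and>
     (\<forall>u\<in>V. is_hybrid E u \<longrightarrow> outdeg E u = 1)"

definition is_path :: "('v \<times> 'v) set \<Rightarrow> 'v \<Rightarrow> 'v \<Rightarrow> 'v list \<Rightarrow> bool" where
  "is_path E u v xs \<longleftrightarrow> xs \<noteq> [] \<and> hd xs = u \<and> last xs = v \<and>
     (\<forall>i. Suc i < length xs \<longrightarrow> (xs ! i, xs ! Suc i) \<in> E)"

definition Cl :: "'v set \<Rightarrow> ('v \<times> 'v) set \<Rightarrow> ('v \<Rightarrow> 'l) \<Rightarrow> 'v \<Rightarrow> 'l set" where
  "Cl V E lab u = lab ` {s \<in> leaves V E. (u, s) \<in> E\<^sup>*}"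

definition Al :: "'v set \<Rightarrow> ('v \<times> 'v) set \<Rightarrow> ('v \<Rightarrow> 'l) \<Rightarrow> 'v \<Rightarrow> 'l set" where
  "Al V E lab u = lab ` {s \<in> leaves V E.
      \<forall>xs. is_path E (root V E) s xs \<longrightarrow> u \<in> set xs}"

definition Bl :: "'v set \<Rightarrow> ('v \<times> 'v) set \<Rightarrow> ('v \<Rightarrow> 'l) \<Rightarrow> 'v \<Rightarrow> 'l set" where
  "Bl V E lab u = Cl V E lab u - Al V E lab u"

definition hyb_weight :: "('v \<times> 'v) set \<Rightarrow> 'v \<Rightarrow> 'v \<Rightarrow> nat" where
  "hyb_weight E v s = Max {length (filter (is_hybrid E) xs) | xs. is_path E v s xs}"

definition theta ::
  "'v set \<Rightarrow> ('v \<times> 'v) set \<Rightarrow> ('v \<Rightarrow> 'l) \<Rightarrow> 'l set \<Rightarrow> 'v \<times> 'v \<Rightarrow> 'l set \<times> 'l set \<times> 'l set" where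
  "theta V E lab S e = (Al V E lab (snd e), Bl V E lab (snd e), S - Cl V E lab (snd e))"

definition thetaAB ::
  "'v set \<Rightarrow> ('v \<times> 'v) set \<Rightarrow> ('v \<Rightarrow> 'l) \<Rightarrow> 'l set \<Rightarrow> 'v \<times> 'v
     \<Rightarrow> ('l \<times> nat) set \<times> ('l \<times> nat) set \<times> 'l set" where
  "thetaAB V E lab S e =
     ({(lab s, hyb_weight E (snd e) s) | s. s \<in> leaves V E \<and> lab s \<in> Al V E lab (snd e)},
      {(lab s, hyb_weight E (snd e) s) | s. s \<in> leaves V E \<and> lab s \<in> Bl V E lab (snd e)},
      S - Cl V E lab (snd e))"

definition thetaAB_net ::
  "'v set \<Rightarrow> ('v \<times> 'v) set \<Rightarrow> ('v \<Rightarrow> 'l) \<Rightarrow> 'l set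
     \<Rightarrow> (('l \<times> nat) set \<times> ('l \<times> nat) set \<times> 'l set) set" where
  "thetaAB_net V E lab S = thetaAB V E lab S ` E"

definition RS :: "'v set \<Rightarrow> ('v \<times> 'v) set \<Rightarrow> ('v \<Rightarrow> 'l) \<Rightarrow> 'v \<Rightarrow> 'l set set" where
  "RS V E lab v = Cl V E lab ` parents E v"

definition is_tree_arc :: "('v \<times> 'v) set \<Rightarrow> 'v \<times> 'v \<Rightarrow> bool" where
  "is_tree_arc E e \<longleftrightarrow> is_tree_node E (snd e)"

definition Psi ::
  "'v set \<Rightarrow> ('v \<times> 'v) set \<Rightarrow> ('v \<Rightarrow> 'l) \<Rightarrow> 'l set \<Rightarrow> 'v \<times> 'v
     \<Rightarrow> (('l \<times> nat) set \<times> ('l \<times> nat) set \<times> 'l set)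
        + (('l set \<times> 'l set \<times> 'l set) \<times> 'l set set)" where
  "Psi V E lab S e =
     (if is_tree_arc E e then Inl (thetaAB V E lab S e)
      else Inr (theta V E lab S e, RS V E lab (snd e)))"

definition Psi_net where
  "Psi_net V E lab S = Psi V E lab S ` E"

definition RS_net :: "'v set \<Rightarrow> ('v \<times> 'v) set \<Rightarrow> ('v \<Rightarrow> 'l) \<Rightarrow> 'l set set set" where
  "RS_net V E lab = {RS V E lab v | v. v \<in> V \<and> is_hybrid E v}"

definition net_iso ::
  "'v set \<Rightarrow> ('v \<times> 'v) set \<Rightarrow> ('v \<Rightarrow> 'l) \<Rightarrow> 'w set \<Rightarrow> ('w \<times> 'w) set \<Rightarrow> ('w \<Rightarrow> 'l) \<Rightarrow> bool" where
  "net_iso V1 E1 lab1 V2 E2 lab2 \<longleftrightarrow>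
     (\<exists>f. bij_betw f V1 V2 \<and>
          (\<forall>u\<in>V1. \<forall>v\<in>V1. (u, v) \<in> E1 \<longleftrightarrow> (f u, f v) \<in> E2) \<and>
          (\<forall>s\<in>leaves V1 E1. lab2 (f s) = lab1 s))"

end

theory Submission imports Defs begin

lemma is_path_Cons:
  "is_path E v s (x # ys) \<longleftrightarrow> x = v \<and> (if ys = [] then v = s else (v, hd ys) \<in> E \<and> is_path E (hd ys) s ys)"
proof (cases ys)
  case Nil thus ?thesis by (auto simp: is_path_def)
next
  case (Cons y zs)
  have "(\<forall>i. Suc i < length (x # y # zs) \<longrightarrow> ((x#y#zs) ! i, (x#y#zs) ! Suc i) \<in> E) \<longleftrightarrow>
        (x, y) \<in> E \<and> (\<forall>i. Suc i < length (y # zs) \<longrightarrow> ((y#zs) ! i, (y#zs) ! Suc i) \<in> E)"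
    (is "?L \<longleftrightarrow> ?R")
  proof
    assume L: ?L
    show ?R
    proof
      show "(x, y) \<in> E" using L[rule_format, of 0] by simp
      show "\<forall>i. Suc i < length (y # zs) \<longrightarrow> ((y#zs) ! i, (y#zs) ! Suc i) \<in> E"
        using L by (metis Suc_less_eq length_Cons nth_Cons_Suc)
    qed
  next
    assume R: ?R
    show ?L
    proof (intro allI impI)
      fix i assume "Suc i < length (x # y # zs)"
      then show "((x#y#zs) ! i, (x#y#zs) ! Suc i) \<in> E" using R by (cases i) auto
    qed
  qed
  then show ?thesis using Cons by (auto simp: is_path_def)
qed

lemma is_path_hd: "is_path E v s xs \<Longrightarrow> xs \<noteq> [] \<and> hd xs = v"
  by (simp add: is_path_def)

fun allp :: "nat \<Rightarrow> ('v\<times>'v) list \<Rightarrow> 'v \<Rightarrow> 'v \<Rightarrow> 'v list list" where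
  "allp 0 El v s = []"
| "allp (Suc n) El v s = (if v = s then [[v]] else []) @
     concat (map (\<lambda>c. map ((#) v) (allp n El c s)) (map snd (filter (\<lambda>e. fst e = v) El)))"

lemma allp_set: "set (allp n El v s) = {xs. is_path (set El) v s xs \<and> length xs \<le> n}"
proof (induction n arbitrary: v)
  case 0
  then show ?case by (auto simp: is_path_def)
next
  case (Suc n)
  show ?case
  proof (intro set_eqI iffI)
    fix xs assume "xs \<in> set (allp (Suc n) El v s)"
    then show "xs \<in> {xs. is_path (set El) v s xs \<and> length xs \<le> Suc n}"
      using Suc.IH is_path_hd by (fastforce simp: is_path_Cons split: if_splits)
  next
    fix xs assume "xs \<in> {xs. is_path (set El) v s xs \<and> length xs \<le> Suc n}"
    then have p: "is_path (set El) v s xs" and l: "length xs \<le> Suc n" by auto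
    then obtain ys where xs: "xs = v # ys" unfolding is_path_def by (cases xs) auto
    show "xs \<in> set (allp (Suc n) El v s)"
    proof (cases ys)
      case Nil then show ?thesis using p xs by (auto simp: is_path_Cons)
    next
      case (Cons y zs)
      then have "(v, y) \<in> set El" "is_path (set El) y s ys" "length ys \<le> n"
        using p xs l by (auto simp: is_path_Cons)
      then have "ys \<in> set (allp n El y s)" using Suc.IH by auto
      then show ?thesis using xs \<open>(v, y) \<in> set El\<close> by force
    qed
  qed
qed

lemma path_trancl:
  assumes "is_path E v s xs" "i < j" "j < length xs"
  shows "(xs ! i, xs ! j) \<in> E\<^sup>+"
  using assms(2,3)
proof (induction j)
  case 0 then show ?case by simp
next
  case (Suc j)
  have e: "(xs ! j, xs ! Suc j) \<in> E" using assms(1) Suc.prems unfolding is_path_def by auto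
  show ?case
  proof (cases "i = j")
    case True then show ?thesis using e by auto
  next
    case False
    then have "(xs ! i, xs ! j) \<in> E\<^sup>+" using Suc by auto
    then show ?thesis using e by auto
  qed
qed

lemma path_distinct:
  assumes "acyclic E" "is_path E v s xs"
  shows "distinct xs"
proof -
  { fix i j assume "i < j" "j < length xs" "xs ! i = xs ! j"
    then have False using path_trancl[OF assms(2)] assms(1) unfolding acyclic_def by metis }
  then show ?thesis unfolding distinct_conv_nth by (metis linorder_neqE_nat)
qed

lemma path_tl_range:
  assumes "is_path E v s xs"
  shows "set (tl xs) \<subseteq> snd ` E"
proof
  fix x assume "x \<in> set (tl xs)"
  then obtain k where k: "k < length (tl xs)" "tl xs ! k = x" by (metis in_set_conv_nth)
  then have "(xs ! k, xs ! Suc k) \<in> E" using assms unfolding is_path_def by auto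
  moreover have "xs ! Suc k = x" using k assms unfolding is_path_def by (cases xs) auto
  ultimately show "x \<in> snd ` E" by force
qed

lemma path_length:
  assumes "acyclic (set El)" "is_path (set El) v s xs"
  shows "length xs \<le> length El + 1"
proof -
  have d: "distinct (tl xs)" using path_distinct[OF assms] by (simp add: distinct_tl)
  have "length (tl xs) = card (set (tl xs))" using d by (simp add: distinct_card)
  also have "\<dots> \<le> card (snd ` set El)" using path_tl_range[OF assms(2)] by (simp add: card_mono)
  also have "\<dots> \<le> length El" by (metis card_image_le card_length dual_order.trans finite_set)
  finally show ?thesis by simp
qed

lemma paths_eq:
  assumes "acyclic (set El)"
  shows "{xs. is_path (set El) v s xs} = set (allp (length El + 1) El v s)"
  unfolding allp_set using path_length[OF assms] by blast

lemma is_root_unique: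
  assumes "acyclic E" "is_root V E r" "is_root V E r'"
  shows "r = r'"
proof (rule ccontr)
  assume ne: "r \<noteq> r'"
  have "r \<in> V" "r' \<in> V" using assms(2,3) unfolding is_root_def by blast+
  then have 1: "(r, r') \<in> E\<^sup>*" and 2: "(r', r) \<in> E\<^sup>*" using assms(2,3) unfolding is_root_def by blast+
  from 1 ne have "(r, r') \<in> E\<^sup>+" by (meson rtranclD)
  then have "(r, r) \<in> E\<^sup>+" using 2 by (rule trancl_rtrancl_trancl)
  then show False using assms(1) unfolding acyclic_def by blast
qed

lemma root_eq: "acyclic E \<Longrightarrow> is_root V E r \<Longrightarrow> root V E = r"
  unfolding root_def by (rule the_equality) (auto dest: is_root_unique)

lemma rooted_code [code]: "rooted V E = (\<exists>r\<in>V. is_root V E r)"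
  unfolding rooted_def is_root_def by auto

lemma leaves_code [code]: "leaves V E = Set.filter (\<lambda>v. outdeg E v = 0) V"
  unfolding leaves_def by auto

lemma children_code [code]: "children (set El) v = set (map snd (filter (\<lambda>e. fst e = v) El))"
  unfolding children_def by (induction El) auto

lemma parents_code [code]: "parents (set El) v = set (map fst (filter (\<lambda>e. snd e = v) El))"
  unfolding parents_def by (induction El) auto

lemma rtrancl_path: "(u, s) \<in> E\<^sup>* \<Longrightarrow> \<exists>xs. is_path E u s xs"
proof (induction rule: converse_rtrancl_induct)
  case base
  have "is_path E s s [s]" by (simp add: is_path_def)
  then show ?case by blast
next
  case (step x y)
  from step(3) obtain ys where ys: "is_path E y s ys" ..
  have "ys \<noteq> []" "hd ys = y" using is_path_hd[OF ys] by auto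
  then have "is_path E x s (x # ys)" using ys step(1) by (simp add: is_path_Cons)
  then show ?case ..
qed

lemma path_rtrancl: "is_path E u s xs \<Longrightarrow> (u, s) \<in> E\<^sup>*"
proof -
  assume p: "is_path E u s xs"
  show ?thesis
  proof (cases "length xs = 1")
    case True then show ?thesis using p unfolding is_path_def by (cases xs) auto
  next
    case False
    then have "length xs > 1" using p unfolding is_path_def by (cases xs) auto
    then have "(xs ! 0, xs ! (length xs - 1)) \<in> E\<^sup>+" using path_trancl[OF p, of 0 "length xs - 1"] by simp
    moreover have "xs ! 0 = u" "xs ! (length xs - 1) = s" using p unfolding is_path_def
      by (auto simp: hd_conv_nth last_conv_nth)
    ultimately show ?thesis by auto
  qed
qed

lemma rtrancl_allp:
  assumes "acyclic (set El)"
  shows "(u, s) \<in> (set El)\<^sup>* \<longleftrightarrow> allp (length El + 1) El u s \<noteq> []"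
proof -
  have "(u, s) \<in> (set El)\<^sup>* \<longleftrightarrow> (\<exists>xs. is_path (set El) u s xs)"
  proof
    assume "(u, s) \<in> (set El)\<^sup>*" then show "\<exists>xs. is_path (set El) u s xs" by (rule rtrancl_path)
  next
    assume "\<exists>xs. is_path (set El) u s xs"
    then obtain xs where "is_path (set El) u s xs" ..
    then show "(u, s) \<in> (set El)\<^sup>*" by (rule path_rtrancl)
  qed
  also have "\<dots> \<longleftrightarrow> {xs. is_path (set El) u s xs} \<noteq> {}" by auto
  also have "\<dots> \<longleftrightarrow> allp (length El + 1) El u s \<noteq> []" unfolding paths_eq[OF assms] by simp
  finally show ?thesis .
qed

lemma acyclic_rank: "\<forall>(a, b)\<in>E. (b::nat) < a \<Longrightarrow> acyclic E"
proof -
  assume h: "\<forall>(a, b)\<in>E. (b::nat) < a"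
  have "(x, y) \<in> E\<^sup>+ \<Longrightarrow> y < x" for x y
  proof (induction rule: trancl_induct)
    case (base y) then show ?case using h by blast
  next
    case (step y z)
    then have "z < y" using h by blast
    then show ?case using step by simp
  qed
  then show ?thesis unfolding acyclic_def by blast
qed

lemma Cl_code:
  assumes "acyclic (set El)"
  shows "Cl V (set El) lab u = lab ` Set.filter (\<lambda>s. allp (length El + 1) El u s \<noteq> []) (leaves V (set El))"
  unfolding Cl_def using rtrancl_allp[OF assms] by auto

lemma is_root_code:
  assumes "acyclic (set El)"
  shows "is_root V (set El) r = (r \<in> V \<and> (\<forall>v\<in>V. allp (length El + 1) El r v \<noteq> []))"
  unfolding is_root_def using rtrancl_allp[OF assms] by auto

lemma Al_code:
  assumes True: "acyclic (set El)"
  shows "Al V (set El) lab u = 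
      lab ` Set.filter (\<lambda>s. \<forall>xs\<in>set (allp (length El + 1) El (root V (set El)) s). u \<in> set xs)
        (leaves V (set El))"
proof -
  have "\<And>s. (\<forall>xs. is_path (set El) (root V (set El)) s xs \<longrightarrow> u \<in> set xs) =
     (\<forall>xs\<in>set (allp (length El + 1) El (root V (set El)) s). u \<in> set xs)"
    using paths_eq[OF True] by blast
  then show ?thesis using True unfolding Al_def by auto
qed

lemma hyb_weight_code:
  assumes True: "acyclic (set El)"
  shows "hyb_weight (set El) v s =
      Max ((\<lambda>xs. length (filter (is_hybrid (set El)) xs)) ` set (allp (length El + 1) El v s))"
proof -
  have "{length (filter (is_hybrid (set El)) xs) | xs. is_path (set El) v s xs} =
    (\<lambda>xs. length (filter (is_hybrid (set El)) xs)) ` {xs. is_path (set El) v s xs}" by auto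
  then show ?thesis using True paths_eq[OF True] unfolding hyb_weight_def by simp
qed

lemma thetaAB_code [code]:
  "thetaAB V E lab S e =
     ((\<lambda>s. (lab s, hyb_weight E (snd e) s)) ` Set.filter (\<lambda>s. lab s \<in> Al V E lab (snd e)) (leaves V E),
      (\<lambda>s. (lab s, hyb_weight E (snd e) s)) ` Set.filter (\<lambda>s. lab s \<in> Bl V E lab (snd e)) (leaves V E),
      S - Cl V E lab (snd e))"
  unfolding thetaAB_def by auto

lemma RS_net_code [code]: "RS_net V E lab = RS V E lab ` Set.filter (is_hybrid E) V"
  unfolding RS_net_def by auto

lemma bij_betw_code [code]:
  "bij_betw f (set xs) B = (distinct (map f (remdups xs)) \<and> f ` set xs = B)"
  unfolding bij_betw_def by (metis distinct_map distinct_remdups set_remdups)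

definition "El1 = [(9::nat,2::nat),(9,8),(11,9),(11,6),(12,4),(12,11),(12,10),(10,1),(10,8),(8,7),(7,5),(7,6),(6,3)]"
definition "El2 = [(11::nat,2::nat),(11,8),(11,6),(12,4),(12,11),(12,10),(10,1),(10,8),(8,7),(7,5),(7,6),(6,3)]"
definition "Vl1 = [1::nat,2,3,4,5,6,7,8,9,10,11,12]"
definition "Vl2 = [1::nat,2,3,4,5,6,7,8,10,11,12]"

lemma ac1: "acyclic (set El1)" by (rule acyclic_rank) code_simp
lemma ir1: "is_root (set Vl1) (set El1) 12" unfolding is_root_code[OF ac1] by code_simp
lemma rt1: "root (set Vl1) (set El1) = 12" by (rule root_eq[OF ac1 ir1])
lemma ac2: "acyclic (set El2)" by (rule acyclic_rank) code_simp
lemma ir2: "is_root (set Vl2) (set El2) 12" unfolding is_root_code[OF ac2] by code_simp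
lemma rt2: "root (set Vl2) (set El2) = 12" by (rule root_eq[OF ac2 ir2])

lemma tc1: "tree_child_network (set Vl1) (set El1) id {1,2,3,4,5}"
proof -
  have "rooted (set Vl1) (set El1)" using ir1 unfolding rooted_def by blast
  moreover have "finite (set Vl1)" by simp
  moreover have "set El1 \<subseteq> set Vl1 \<times> set Vl1" by (simp add: El1_def Vl1_def)
  moreover have "bij_betw id (leaves (set Vl1) (set El1)) {1,2,3,4,5}" by code_simp
  moreover have "\<forall>u\<in>set Vl1 - leaves (set Vl1) (set El1). \<exists>c\<in>children (set El1) u. is_tree_node (set El1) c"
    by code_simp
  moreover have "\<forall>u\<in>set Vl1. is_tree_node (set El1) u \<longrightarrow> outdeg (set El1) u \<noteq> 1" by code_simp
  moreover have "\<forall>u\<in>set Vl1. is_hybrid (set El1) u \<longrightarrow> outdeg (set El1) u = 1" by code_simp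
  ultimately show ?thesis using ac1 unfolding tree_child_network_def is_dag_def labeled_in_def by blast
qed

lemma tc2: "tree_child_network (set Vl2) (set El2) id {1,2,3,4,5}"
proof -
  have "rooted (set Vl2) (set El2)" using ir2 unfolding rooted_def by blast
  moreover have "finite (set Vl2)" by simp
  moreover have "set El2 \<subseteq> set Vl2 \<times> set Vl2" by (simp add: El2_def Vl2_def)
  moreover have "bij_betw id (leaves (set Vl2) (set El2)) {1,2,3,4,5}" by code_simp
  moreover have "\<forall>u\<in>set Vl2 - leaves (set Vl2) (set El2). \<exists>c\<in>children (set El2) u. is_tree_node (set El2) c"
    by code_simp
  moreover have "\<forall>u\<in>set Vl2. is_tree_node (set El2) u \<longrightarrow> outdeg (set El2) u \<noteq> 1" by code_simp
  moreover have "\<forall>u\<in>set Vl2. is_hybrid (set El2) u \<longrightarrow> outdeg (set El2) u = 1" by code_simp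
  ultimately show ?thesis using ac2 unfolding tree_child_network_def is_dag_def labeled_in_def by blast
qed

lemma thq: "thetaAB_net (set Vl1) (set El1) id {1,2,3,4,5} = thetaAB_net (set Vl2) (set El2) id {1,2,3,4,5}"
  unfolding thetaAB_net_def thetaAB_code Bl_def Al_code[OF ac1] Al_code[OF ac2] Cl_code[OF ac1] Cl_code[OF ac2]
    hyb_weight_code[OF ac1] hyb_weight_code[OF ac2] rt1 rt2
  by code_simp

lemma psq: "Psi_net (set Vl1) (set El1) id {1,2,3,4,5} = Psi_net (set Vl2) (set El2) id {1,2,3,4,5}"
  unfolding Psi_net_def Psi_def theta_def RS_def thetaAB_code Bl_def Al_code[OF ac1] Al_code[OF ac2] Cl_code[OF ac1] Cl_code[OF ac2]
    hyb_weight_code[OF ac1] hyb_weight_code[OF ac2] rt1 rt2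
  by code_simp

lemma rsq: "RS_net (set Vl1) (set El1) id = RS_net (set Vl2) (set El2) id"
  unfolding RS_net_code RS_def Cl_code[OF ac1] Cl_code[OF ac2]
  by code_simp

lemma niso: "\<not> net_iso (set Vl1) (set El1) id (set Vl2) (set El2) id"
proof
  assume "net_iso (set Vl1) (set El1) id (set Vl2) (set El2) id"
  then obtain f where "bij_betw f (set Vl1) (set Vl2)" unfolding net_iso_def by blast
  then have "card (set Vl1) = card (set Vl2)" by (rule bij_betw_same_card)
  moreover have "card (set Vl1) \<noteq> card (set Vl2)" by code_simp
  ultimately show False by simp
qed

theorem mainTheorem5:
  shows "\<exists>(V1 :: nat set) E1 (lab1 :: nat \<Rightarrow> nat) (V2 :: nat set) E2 (lab2 :: nat \<Rightarrow> nat).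
     tree_child_network V1 E1 lab1 {1,2,3,4,5} \<and>
     tree_child_network V2 E2 lab2 {1,2,3,4,5} \<and>
     \<not> net_iso V1 E1 lab1 V2 E2 lab2 \<and>
     thetaAB_net V1 E1 lab1 {1,2,3,4,5} = thetaAB_net V2 E2 lab2 {1,2,3,4,5} \<and>
     Psi_net V1 E1 lab1 {1,2,3,4,5} = Psi_net V2 E2 lab2 {1,2,3,4,5} \<and>
     RS_net V1 E1 lab1 = RS_net V2 E2 lab2"
  using tc1 tc2 niso thq psq rsq by blast

end
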